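(* Suppose $\{0,1\}^\ell$ admits a code decomposition with chain of parameters $(\ell,k_0,d_0)-(\ell,k_1,d_1)-\dots-(\ell,k_{m-1},d_{m-1})$, and set $k_m=0$. Then there exists a kernel $g$ of dimension $\ell$ with $E(g)\ge\frac1\ell\sum_{j=0}^{m-1}(k_j-k_{j+1})\log_\ell d_j$.
   Context: A code decomposition of $\{0,1\}^\ell$ with chain of parameters $(\ell,k_0,d_0)-(\ell,k_1,d_1)-\dots-(\ell,k_{m-1},d_{m-1})$ (integers $\ell=k_0>k_1>\dots>k_{m-1}\ge0$) is a family of nested partitions: level $0$ consists of the single set $\{0,1\}^\ell$, and for $j=1,\dots,m-1$ each set of level $j-1$ is partitioned into equally sized sets forming level $j$; every set at level $j$ has exactly $2^{k_j}$ elements and minimum Hamming distance at least $d_j$ between distinct elements. A kernel of dimension $\ell$ is a bijection $g:\{0,1\}^\ell\to\{0,1\}^\ell$; ${\bf a}\bullet{\bf b}$ denotes concatenation, $d_H$ Hamming distance; partial distances $D_{min}^{(i)}=\min\{d_H(g({\bf w}\bullet 0\bullet{\bf u}),g({\bf w}\bullet 1\bullet {\bf v})) : {\bf w}\in\{0,1\}^i,\ {\bf u},{\bf v}\in\{0,1\}^{\ell-i-1}\}$; exponent $E(g)=\frac1\ell\sum_{i=0}^{\ell-1}\log_\ell D_{min}^{(i)}$. *)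

theory Defs
  imports "HOL-Analysis.Analysis" "HOL-Library.Disjoint_Sets"
begin

definition bvecs :: "nat \<Rightarrow> bool list set" where
  "bvecs l = {xs. length xs = l}"

definition hamming :: "bool list \<Rightarrow> bool list \<Rightarrow> nat" where
  "hamming xs ys = card {i. i < length xs \<and> xs ! i \<noteq> ys ! i}"

definition kernel :: "nat \<Rightarrow> (bool list \<Rightarrow> bool list) \<Rightarrow> bool" where
  "kernel l g \<longleftrightarrow> bij_betw g (bvecs l) (bvecs l)"

definition partial_distance :: "nat \<Rightarrow> (bool list \<Rightarrow> bool list) \<Rightarrow> nat \<Rightarrow> nat" where
  "partial_distance l g i = Min {hamming (g (w @ [False] @ u)) (g (w @ [True] @ v)) | w u v.
       w \<in> bvecs i \<and> u \<in> bvecs (l - i - 1) \<and> v \<in> bvecs (l - i - 1)}"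

definition exponent :: "nat \<Rightarrow> (bool list \<Rightarrow> bool list) \<Rightarrow> real" where
  "exponent l g = (1 / real l) * (\<Sum>i<l. log (real l) (real (partial_distance l g i)))"

text \<open>Code decomposition with chain of parameters (l,k_0,d_0)-...-(l,k_{m-1},d_{m-1});
  P j is the family of sets at level j.\<close>
definition code_decomposition ::
  "nat \<Rightarrow> nat \<Rightarrow> (nat \<Rightarrow> nat) \<Rightarrow> (nat \<Rightarrow> nat) \<Rightarrow> (nat \<Rightarrow> bool list set set) \<Rightarrow> bool" where
  "code_decomposition l m k d P \<longleftrightarrow>
     m \<ge> 1 \<and> k 0 = l \<and> (\<forall>j. j + 1 < m \<longrightarrow> k (j + 1) < k j) \<and>
     P 0 = {bvecs l} \<and>
     (\<forall>j. 1 \<le> j \<and> j < m \<longrightarrow>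
        (\<forall>S \<in> P (j - 1). partition_on S {T \<in> P j. T \<subseteq> S}) \<and>
        (\<forall>T \<in> P j. \<exists>S \<in> P (j - 1). T \<subseteq> S)) \<and>
     (\<forall>j < m. \<forall>T \<in> P j. card T = 2 ^ k j \<and>
        (\<forall>x\<in>T. \<forall>y\<in>T. x \<noteq> y \<longrightarrow> d j \<le> hamming x y))"

end

theory Submission
  imports Defs
begin

lemma bvecs_finite: "finite (bvecs n)"
  using finite_lists_length_eq[of "UNIV::bool set" n] by (simp add: bvecs_def)

lemma bvecs_card: "card (bvecs n) = 2 ^ n"
  using card_lists_length_eq[of "UNIV::bool set" n] by (simp add: bvecs_def)

lemma hamming_pos:
  assumes "length x = length y" "x \<noteq> y" shows "1 \<le> hamming x y"
proof (rule ccontr)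
  assume "\<not> 1 \<le> hamming x y"
  hence "card {i. i < length x \<and> x ! i \<noteq> y ! i} = 0" unfolding hamming_def by linarith
  moreover have "finite {i. i < length x \<and> x ! i \<noteq> y ! i}" by simp
  ultimately have "{i. i < length x \<and> x ! i \<noteq> y ! i} = {}" by (meson card_0_eq)
  hence "\<forall>i<length x. x ! i = y ! i" by blast
  with assms show False using nth_equalityI by blast
qed

lemma hamming_le: "hamming x y \<le> length x"
proof -
  have "{i. i < length x \<and> x ! i \<noteq> y ! i} \<subseteq> {..<length x}" by auto
  hence "card {i. i < length x \<and> x ! i \<noteq> y ! i} \<le> card {..<length x}" by (intro card_mono) auto
  thus ?thesis by (simp add: hamming_def)
qed

locale cdec =
  fixes l m :: nat and k d :: "nat \<Rightarrow> nat" and P :: "nat \<Rightarrow> bool list set set"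
  assumes cd: "code_decomposition l m k d P"
begin

lemma cdD: "1 \<le> m \<and> k 0 = l \<and> (\<forall>j. j + 1 < m \<longrightarrow> k (j + 1) < k j) \<and>
     P 0 = {bvecs l} \<and>
     (\<forall>j. 1 \<le> j \<and> j < m \<longrightarrow>
        (\<forall>S \<in> P (j - 1). partition_on S {T \<in> P j. T \<subseteq> S}) \<and>
        (\<forall>T \<in> P j. \<exists>S \<in> P (j - 1). T \<subseteq> S)) \<and>
     (\<forall>j < m. \<forall>T \<in> P j. card T = 2 ^ k j \<and>
        (\<forall>x\<in>T. \<forall>y\<in>T. x \<noteq> y \<longrightarrow> d j \<le> hamming x y))"
  using cd unfolding code_decomposition_def .

lemma m1: "1 \<le> m" using cdD by (elim conjE)
lemma k0: "k 0 = l" using cdD by (elim conjE)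
lemma kdec: "j + 1 < m \<Longrightarrow> k (j+1) < k j" using cdD by (elim conjE) simp
lemma P0: "P 0 = {bvecs l}" using cdD by (elim conjE)
lemma part: "1 \<le> j \<Longrightarrow> j < m \<Longrightarrow> S \<in> P (j - 1) \<Longrightarrow> partition_on S {T \<in> P j. T \<subseteq> S}"
  using cdD by (elim conjE) simp
lemma up: "1 \<le> j \<Longrightarrow> j < m \<Longrightarrow> T \<in> P j \<Longrightarrow> \<exists>S \<in> P (j - 1). T \<subseteq> S"
  using cdD by (elim conjE) simp
lemma cardP: "j < m \<Longrightarrow> T \<in> P j \<Longrightarrow> card T = 2 ^ k j"
  using cdD by (elim conjE) simp
lemma distP: "j < m \<Longrightarrow> T \<in> P j \<Longrightarrow> x \<in> T \<Longrightarrow> y \<in> T \<Longrightarrow> x \<noteq> y \<Longrightarrow> d j \<le> hamming x y"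
  using cdD by (elim conjE) simp

lemma kmono: "j \<le> j' \<Longrightarrow> j' < m \<Longrightarrow> k j' \<le> k j"
proof (induction j' rule: dec_induct)
  case base then show ?case by simp
next
  case (step n) then show ?case using kdec[of n] by simp
qed

lemma kle: "j < m \<Longrightarrow> k j \<le> l"
  using kmono[of 0 j] k0 by simp

lemma Psub: "j < m \<Longrightarrow> T \<in> P j \<Longrightarrow> T \<subseteq> bvecs l"
proof (induction j arbitrary: T)
  case 0 then show ?case using P0 by simp
next
  case (Suc j)
  then obtain S where "S \<in> P j" "T \<subseteq> S" using up[of "Suc j" T] by auto
  then show ?case using Suc by auto
qed

lemma Pfin: "j < m \<Longrightarrow> T \<in> P j \<Longrightarrow> finite T"
  using Psub bvecs_finite finite_subset by blast

definition children where "children j S = {T \<in> P (j+1). T \<subseteq> S}"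

lemma children_part: "j + 1 < m \<Longrightarrow> S \<in> P j \<Longrightarrow> partition_on S (children j S)"
  using part[of "j+1" S] by (simp add: children_def)

lemma children_card: assumes a1: "j + 1 < m" and a2: "S \<in> P j"
  shows "card (children j S) = 2 ^ (k j - k (j+1))"
proof -
  have jm: "j < m" using a1 by simp
  have pt: "partition_on S (children j S)" using children_part[OF a1 a2] .
  have disj: "pairwise disjnt (children j S)" using pt unfolding partition_on_def by (elim conjE)
  have U: "\<Union>(children j S) = S" using pt unfolding partition_on_def by (elim conjE)
  have finT: "\<And>T. T \<in> children j S \<Longrightarrow> finite T"
  proof -
    fix T assume "T \<in> children j S"
    hence "T \<in> P (j+1)" by (simp add: children_def)
    thus "finite T" by (rule Pfin[OF a1])
  qed
  have cU: "card (\<Union>(children j S)) = sum card (children j S)" by (rule card_Union_disjoint[OF disj finT])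
  have sc: "sum card (children j S) = sum (\<lambda>_. 2^k (j+1)) (children j S)"
  proof (rule sum.cong[OF refl])
    fix T assume "T \<in> children j S"
    hence "T \<in> P (j+1)" by (simp add: children_def)
    thus "card T = 2 ^ k (j+1)" by (rule cardP[OF a1])
  qed
  have cS: "card S = 2 ^ k j" by (rule cardP[OF jm a2])
  have e1: "(2::nat) ^ k j = card (children j S) * 2 ^ k (j+1)"
    using cU U sc cS by simp
  have "k j - k (j+1) + k (j+1) = k j" using kdec[OF a1] by simp
  hence e2: "(2::nat) ^ k j = 2 ^ (k j - k (j+1)) * 2 ^ k (j+1)" by (metis power_add)
  from e1 e2 show ?thesis by simp
qed

definition ch where "ch j S = (SOME f. bij_betw f (bvecs (k j - k (j+1))) (children j S))"
definition lf :: "bool list set \<Rightarrow> bool list \<Rightarrow> bool list" where "lf S = (SOME f. bij_betw f (bvecs (k (m-1))) S)"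

lemma children_fin: assumes a1: "j + 1 < m" and a2: "S \<in> P j" shows "finite (children j S)"
proof (rule finite_subset)
  show "children j S \<subseteq> Pow S" unfolding children_def by blast
  have "j < m" using a1 by simp
  thus "finite (Pow S)" using Pfin a2 by blast
qed

lemma ch_bij: assumes a1: "j + 1 < m" and a2: "S \<in> P j"
  shows "bij_betw (ch j S) (bvecs (k j - k (j+1))) (children j S)"
proof -
  have c: "card (bvecs (k j - k (j+1))) = card (children j S)"
    unfolding bvecs_card children_card[OF a1 a2] ..
  have "\<exists>f. bij_betw f (bvecs (k j - k (j+1))) (children j S)"
    by (rule finite_same_card_bij[OF bvecs_finite children_fin[OF a1 a2] c])
  then show ?thesis unfolding ch_def by (rule someI_ex)
qed

lemma lf_bij: assumes a: "S \<in> P (m-1)" shows "bij_betw (lf S) (bvecs (k (m-1))) S"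
proof -
  have mm: "m - 1 < m" using m1 by simp
  have c: "card (bvecs (k (m-1))) = card S"
    unfolding bvecs_card cardP[OF mm a] ..
  have "\<exists>f. bij_betw f (bvecs (k (m-1))) S"
    by (rule finite_same_card_bij[OF bvecs_finite Pfin[OF mm a] c])
  then show ?thesis unfolding lf_def by (rule someI_ex)
qed

function G :: "nat \<Rightarrow> bool list set \<Rightarrow> bool list \<Rightarrow> bool list" where
  "G j S xs = (if j + 1 < m then G (j+1) (ch j S (take (k j - k (j+1)) xs)) (drop (k j - k (j+1)) xs)
              else lf S xs)"
  by pat_completeness auto
termination by (relation "Wellfounded.measure (\<lambda>(j,S,xs). m - j)") auto

declare G.simps[simp del]

lemma G_bij: "j < m \<Longrightarrow> S \<in> P j \<Longrightarrow> bij_betw (G j S) (bvecs (k j)) S"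
proof (induction "m - j" arbitrary: j S)
  case 0 then show ?case by simp
next
  case (Suc n)
  show ?case
  proof (cases "j + 1 < m")
    case False
    hence jm: "j = m - 1" using Suc by simp
    have "bij_betw (lf S) (bvecs (k j)) S" using lf_bij Suc jm by simp
    moreover have "G j S = lf S"
    proof
      fix xs show "G j S xs = lf S xs" by (subst G.simps, rule if_not_P[OF False])
    qed
    ultimately show ?thesis by simp
  next
    case True
    define a where "a = k j - k (j+1)"
    define c where "c = ch j S"
    have kj: "k j = a + k (j+1)" using kdec[OF True] a_def by simp
    have cb: "bij_betw c (bvecs a) (children j S)" using ch_bij True Suc.prems unfolding a_def c_def by blast
    have pt: "partition_on S (children j S)" using children_part True Suc.prems by blast
    have IH: "\<And>T. T \<in> P (j+1) \<Longrightarrow> bij_betw (G (j+1) T) (bvecs (k (j+1))) T"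
      using Suc True by (intro Suc.hyps) auto
    have chP: "\<And>T. T \<in> children j S \<Longrightarrow> T \<in> P (j+1) \<and> T \<subseteq> S" by (simp add: children_def)
    have Geq: "\<And>xs. G j S xs = G (j+1) (c (take a xs)) (drop a xs)"
      using True unfolding a_def c_def by (subst G.simps, rule if_P)
    have mem: "\<And>xs. xs \<in> bvecs (k j) \<Longrightarrow> c (take a xs) \<in> children j S \<and> G j S xs \<in> c (take a xs)"
    proof -
      fix xs assume xs: "xs \<in> bvecs (k j)"
      have t: "take a xs \<in> bvecs a" and dr: "drop a xs \<in> bvecs (k (j+1))" using xs kj by (auto simp: bvecs_def)
      have "c (take a xs) \<in> children j S" using cb t bij_betwE by blast
      moreover have "G (j+1) (c (take a xs)) (drop a xs) \<in> c (take a xs)"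
        using IH[of "c (take a xs)"] chP calculation dr bij_betwE by blast
      ultimately show "c (take a xs) \<in> children j S \<and> G j S xs \<in> c (take a xs)" using Geq by simp
    qed
    show ?thesis
    proof (rule bij_betw_imageI)
      show "inj_on (G j S) (bvecs (k j))"
      proof (rule inj_onI)
        fix xs ys assume xs: "xs \<in> bvecs (k j)" and ys: "ys \<in> bvecs (k j)" and e: "G j S xs = G j S ys"
        have m1: "c (take a xs) \<in> children j S" "G j S xs \<in> c (take a xs)" using mem xs by auto
        have m2: "c (take a ys) \<in> children j S" "G j S xs \<in> c (take a ys)" using mem ys e by auto
        have "c (take a xs) = c (take a ys)"
          using pt m1 m2 unfolding partition_on_def disjoint_def by blast
        moreover have "take a xs \<in> bvecs a" "take a ys \<in> bvecs a" using xs ys kj by (auto simp: bvecs_def)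
        ultimately have tk: "take a xs = take a ys" using cb unfolding bij_betw_def inj_on_def by blast
        have "drop a xs \<in> bvecs (k (j+1))" "drop a ys \<in> bvecs (k (j+1))" using xs ys kj by (auto simp: bvecs_def)
        moreover have "G (j+1) (c (take a xs)) (drop a xs) = G (j+1) (c (take a xs)) (drop a ys)"
          using e Geq tk by metis
        ultimately have "drop a xs = drop a ys"
          using IH[of "c (take a xs)"] chP m1(1) unfolding bij_betw_def inj_on_def by blast
        with tk show "xs = ys" by (metis append_take_drop_id)
      qed
    next
      show "G j S ` bvecs (k j) = S"
      proof
        show "G j S ` bvecs (k j) \<subseteq> S" using mem chP by blast
      next
        show "S \<subseteq> G j S ` bvecs (k j)"
        proof
          fix s assume s: "s \<in> S"
          then obtain T where T: "T \<in> children j S" "s \<in> T" using pt unfolding partition_on_def by blast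
          then obtain p where p: "p \<in> bvecs a" "c p = T" using cb by (metis bij_betw_def imageE)
          obtain q where q: "q \<in> bvecs (k (j+1))" "G (j+1) T q = s"
            using IH[of T] chP T by (metis bij_betw_def imageE)
          have lp: "length p = a" using p by (simp add: bvecs_def)
          have "G j S (p @ q) = s" using Geq[of "p @ q"] lp p q by simp
          moreover have "p @ q \<in> bvecs (k j)" using p q kj by (simp add: bvecs_def)
          ultimately show "s \<in> G j S ` bvecs (k j)" by blast
        qed
      qed
    qed
  qed
qed

lemma G_prefix: "j \<le> j' \<Longrightarrow> j' < m \<Longrightarrow> S \<in> P j \<Longrightarrow> xs \<in> bvecs (k j) \<Longrightarrow> ys \<in> bvecs (k j) \<Longrightarrow>
   take (k j - k j') xs = take (k j - k j') ys \<Longrightarrow> \<exists>T\<in>P j'. G j S xs \<in> T \<and> G j S ys \<in> T"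
proof (induction "m - j" arbitrary: j S xs ys)
  case 0 then show ?case by simp
next
  case (Suc n)
  show ?case
  proof (cases "j = j'")
    case True
    then show ?thesis using G_bij[of j S] Suc.prems bij_betwE by (metis le_less_trans)
  next
    case False
    hence True: "j + 1 < m" "j + 1 \<le> j'" using Suc.prems by auto
    define a where "a = k j - k (j+1)"
    define c where "c = ch j S"
    have kj: "k j = a + k (j+1)" using kdec[OF True(1)] a_def by simp
    have kk: "k j' \<le> k (j+1)" using kmono True Suc.prems by blast
    have cb: "bij_betw c (bvecs a) (children j S)" using ch_bij True Suc.prems unfolding a_def c_def by blast
    have Geq: "\<And>xs. G j S xs = G (j+1) (c (take a xs)) (drop a xs)"
      unfolding a_def c_def by (subst G.simps, rule if_P[OF True(1)])
    have e: "k j - k j' = a + (k (j+1) - k j')" using kj kk by simp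
    have p6: "take (a + (k (j+1) - k j')) xs = take (a + (k (j+1) - k j')) ys"
      using Suc.prems(6) unfolding e .
    have "take a (take (a + (k (j+1) - k j')) xs) = take a (take (a + (k (j+1) - k j')) ys)"
      using p6 by simp
    hence tk: "take a xs = take a ys" by (simp add: take_take)
    have "drop a (take (a + (k (j+1) - k j')) xs) = drop a (take (a + (k (j+1) - k j')) ys)"
      using p6 by simp
    hence td: "take (k (j+1) - k j') (drop a xs) = take (k (j+1) - k j') (drop a ys)"
      by (simp add: drop_take)
    have C: "c (take a xs) \<in> P (j+1)"
      using cb Suc.prems(4) kj bij_betwE unfolding children_def bvecs_def by fastforce
    have "\<exists>T\<in>P j'. G (j+1) (c (take a xs)) (drop a xs) \<in> T \<and> G (j+1) (c (take a xs)) (drop a ys) \<in> T"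
      using Suc.prems Suc.hyps(2) kj True C td by (intro Suc.hyps) (auto simp: bvecs_def)
    then show ?thesis using Geq tk by metis
  qed
qed

definition g where "g = G 0 (bvecs l)"

lemma g_bij: "bij_betw g (bvecs l) (bvecs l)"
  using G_bij[of 0 "bvecs l"] m1 P0 k0 unfolding g_def by simp

definition kk where "kk j = (if j < m then k j else 0)"

lemma pd_bound:
  assumes j: "j < m" and i1: "l - k j \<le> i" and i2: "i < l - kk (j+1)"
  shows "d j \<le> partial_distance l g i \<and> 1 \<le> partial_distance l g i"
proof -
  have il: "i < l" using i2 by simp
  let ?M = "{hamming (g (w @ [False] @ u)) (g (w @ [True] @ v)) | w u v.
       w \<in> bvecs i \<and> u \<in> bvecs (l - i - 1) \<and> v \<in> bvecs (l - i - 1)}"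
  have gin: "\<And>x. x \<in> bvecs l \<Longrightarrow> g x \<in> bvecs l" using g_bij bij_betwE by blast
  have bnd: "\<And>x. x \<in> ?M \<Longrightarrow> d j \<le> x \<and> 1 \<le> x \<and> x \<le> l"
  proof -
    fix x assume "x \<in> ?M"
    then obtain w u v where x: "x = hamming (g (w @ [False] @ u)) (g (w @ [True] @ v))"
      and w: "w \<in> bvecs i" and u: "u \<in> bvecs (l - i - 1)" and v: "v \<in> bvecs (l - i - 1)" by blast
    define x1 where "x1 = w @ [False] @ u"
    define x2 where "x2 = w @ [True] @ v"
    have lw: "length w = i" using w by (simp add: bvecs_def)
    have b1: "x1 \<in> bvecs l" "x2 \<in> bvecs l" using lw u v il by (auto simp: bvecs_def x1_def x2_def)
    have ne: "x1 \<noteq> x2"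
    proof
      assume "x1 = x2" hence "x1 ! i = x2 ! i" by simp
      thus False using lw by (simp add: x1_def x2_def nth_append)
    qed
    have gne: "g x1 \<noteq> g x2" using ne b1 g_bij unfolding bij_betw_def inj_on_def by blast
    have tk: "take (k 0 - k j) x1 = take (k 0 - k j) x2"
      using i1 lw k0 by (simp add: x1_def x2_def)
    obtain T where T: "T \<in> P j" "g x1 \<in> T" "g x2 \<in> T"
      using G_prefix[of 0 j "bvecs l" x1 x2] j b1 tk P0 k0 unfolding g_def by auto
    have "d j \<le> x" using distP[OF j T gne] x x1_def x2_def by simp
    moreover have "1 \<le> x" using hamming_pos[OF _ gne] gin b1 x x1_def x2_def by (simp add: bvecs_def)
    moreover have "x \<le> l" using hamming_le[of "g x1" "g x2"] gin b1 x x1_def x2_def by (simp add: bvecs_def)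
    ultimately show "d j \<le> x \<and> 1 \<le> x \<and> x \<le> l" by simp
  qed
  have fin: "finite ?M"
  proof (rule finite_subset[of _ "{..l}"])
    show "?M \<subseteq> {..l}"
    proof
      fix x assume "x \<in> ?M" thus "x \<in> {..l}" using bnd by simp
    qed
  qed simp
  have r: "replicate i False \<in> bvecs i" "replicate (l-i-1) False \<in> bvecs (l-i-1)" by (simp_all add: bvecs_def)
  have "hamming (g (replicate i False @ [False] @ replicate (l-i-1) False))
     (g (replicate i False @ [True] @ replicate (l-i-1) False)) \<in> ?M"
    using r by blast
  hence nem: "?M \<noteq> {}" by blast
  have "Min ?M \<in> ?M" by (rule Min_in[OF fin nem])
  hence "d j \<le> Min ?M \<and> 1 \<le> Min ?M" using bnd by blast
  thus ?thesis unfolding partial_distance_def .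
qed

lemma log_bound:
  assumes l: "1 < l" and j: "j < m" and i1: "l - k j \<le> i" and i2: "i < l - kk (j+1)"
  shows "log (real l) (real (d j)) \<le> log (real l) (real (partial_distance l g i))"
proof -
  have b: "d j \<le> partial_distance l g i" "1 \<le> partial_distance l g i" using pd_bound[OF j i1 i2] by auto
  show ?thesis
  proof (cases "d j = 0")
    case True
    have z: "log (real l) 0 = 0" by (simp add: log_def)
    have "0 \<le> log (real l) (real (partial_distance l g i))" using b l by simp
    then show ?thesis using True z by simp
  next
    case False
    then show ?thesis using b l by simp
  qed
qed

lemma kk_dec: "kk (Suc n) \<le> kk n"
  using kdec[of n] by (auto simp: kk_def)

lemma kk0: "kk 0 = l" using m1 k0 by (simp add: kk_def)

lemma sum_split: "n \<le> m \<Longrightarrow> (\<Sum>i<l - kk n. f i) = (\<Sum>j<n. \<Sum>i\<in>{l - kk j..<l - kk (Suc j)}. f i)"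
proof (induction n)
  case 0 then show ?case using kk0 by simp
next
  case (Suc n)
  have "(\<Sum>i<l - kk (Suc n). f i) = (\<Sum>i\<in>{0..<l - kk n}. f i) + (\<Sum>i\<in>{l - kk n..<l - kk (Suc n)}. f i)"
    using kk_dec[of n] by (simp add: sum.atLeastLessThan_concat atLeast0LessThan[symmetric] diff_le_mono2)
  then show ?case using Suc by (simp add: atLeast0LessThan)
qed

end


theorem corollary1:
  fixes l m :: nat and k d :: "nat \<Rightarrow> nat" and P :: "nat \<Rightarrow> bool list set set"
  assumes "code_decomposition l m k d P"
  shows "\<exists>g. kernel l g \<and>
    exponent l g \<ge> (1 / real l) *
      (\<Sum>j<m. (real (k j) - real (if j + 1 < m then k (j + 1) else 0)) * log (real l) (real (d j)))"
proof -
  interpret cdec l m k d P using assms by unfold_locales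
  have ker: "kernel l g" using g_bij by (simp add: kernel_def)
  show ?thesis
  proof (cases "l \<le> 1")
    case True
    hence "l = 0 \<or> l = 1" by auto
    then show ?thesis
    proof
      assume "l = 0" then show ?thesis using ker by (intro exI[of _ g]) (simp add: exponent_def)
    next
      assume "l = 1" then show ?thesis using ker by (intro exI[of _ g]) (simp add: exponent_def log_def)
    qed
  next
    case False
    hence l1: "1 < l" by simp
    let ?f = "\<lambda>i. log (real l) (real (partial_distance l g i))"
    have kkm: "kk m = 0" by (simp add: kk_def)
    have "(\<Sum>i<l. ?f i) = (\<Sum>j<m. \<Sum>i\<in>{l - kk j..<l - kk (Suc j)}. ?f i)"
      using sum_split[of m ?f] kkm by simp
    also have "\<dots> \<ge> (\<Sum>j<m. \<Sum>i\<in>{l - kk j..<l - kk (Suc j)}. log (real l) (real (d j)))"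
    proof (intro sum_mono)
      fix j i assume j: "j \<in> {..<m}" and i: "i \<in> {l - kk j..<l - kk (Suc j)}"
      show "log (real l) (real (d j)) \<le> ?f i"
        using log_bound[OF l1, of j i] j i by (simp add: kk_def)
    qed
    also have "(\<Sum>j<m. \<Sum>i\<in>{l - kk j..<l - kk (Suc j)}. log (real l) (real (d j)))
       = (\<Sum>j<m. (real (k j) - real (if j + 1 < m then k (j + 1) else 0)) * log (real l) (real (d j)))"
    proof (intro sum.cong refl)
      fix j assume j: "j \<in> {..<m}"
      have a: "kk (Suc j) \<le> k j" "k j \<le> l" "kk j = k j" using kk_dec[of j] kle[of j] j by (auto simp: kk_def)
      have "real (card {l - kk j..<l - kk (Suc j)}) = real (k j) - real (kk (Suc j))"
        using a by (simp add: of_nat_diff)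
      moreover have "kk (Suc j) = (if j + 1 < m then k (j + 1) else 0)" by (simp add: kk_def)
      ultimately show "(\<Sum>i\<in>{l - kk j..<l - kk (Suc j)}. log (real l) (real (d j)))
         = (real (k j) - real (if j + 1 < m then k (j + 1) else 0)) * log (real l) (real (d j))"
        by simp
    qed
    finally have "(\<Sum>j<m. (real (k j) - real (if j + 1 < m then k (j + 1) else 0)) * log (real l) (real (d j)))
       \<le> (\<Sum>i<l. ?f i)" .
    hence "(1 / real l) * (\<Sum>j<m. (real (k j) - real (if j + 1 < m then k (j + 1) else 0)) * log (real l) (real (d j)))
       \<le> exponent l g" unfolding exponent_def by (intro mult_left_mono) auto
    then show ?thesis using ker by blast
  qed
qed

end
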